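(* Let $q\ge2$, $\beta>0$, $u>0$, and let $\Phi_0:\mathbb Z_q\to[0,\infty)$ be even with $\Phi_0(0)=0$ and $\Phi_0(i)\ge u$ for all $i\neq0$. Let $Q_0$ be the symmetric $q\times q$ matrix $Q_0(i,j)=e^{-\beta\Phi_0(i-j)}/\sum_{k\in\mathbb Z_q}e^{-\beta\Phi_0(k)}$. Then every eigenvalue $\lambda$ of $Q_0$ satisfies $$\lambda\ \ge\ \frac{1-(q-1)e^{-\beta u}}{1+(q-1)e^{-\beta u}}.$$
   Context: $\mathbb Z_q=\{0,\dots,q-1\}$ with addition mod $q$. $Q_0$ is the normalized transfer matrix of a clock model with pair potential $u_{i,j}=\Phi_0(i-j)$. *)

theory Defs
  imports Complex_Main "Jordan_Normal_Form.Char_Poly"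
begin

(* Z_q is represented by {0..<q} (nat), with subtraction i - j computed as (i + q - j) mod q.
   Phi0 is only relevant on {0..<q}. *)
definition clock_Q0 :: "nat \<Rightarrow> real \<Rightarrow> (nat \<Rightarrow> real) \<Rightarrow> real mat" where
  "clock_Q0 q \<beta> \<Phi>0 =
     mat q q (\<lambda>(i, j). exp (- \<beta> * \<Phi>0 ((i + q - j) mod q)) / (\<Sum>k<q. exp (- \<beta> * \<Phi>0 k)))"

end

theory Submission
  imports Defs
begin

lemma reidx_inv:
  fixes i j q :: nat
  assumes "i < q" "j < q"
  shows "(i + q - (i + q - j) mod q) mod q = j"
proof (cases "j \<le> i")
  case True
  then have "(i + q - j) mod q = i - j" using assms
    by (metis add.commute add_diff_assoc2 le_add_diff_inverse less_imp_diff_less mod_add_self2 mod_less)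
  then show ?thesis using True assms by simp
next
  case False
  then have "(i + q - j) mod q = i + q - j" using assms by simp
  then show ?thesis using False assms by simp
qed

lemma reidx_sum:
  fixes f :: "nat \<Rightarrow> real"
  assumes "i < q"
  shows "(\<Sum>j<q. f ((i + q - j) mod q)) = (\<Sum>k<q. f k)"
proof (rule sum.reindex_bij_witness[where i="\<lambda>k. (i + q - k) mod q" and j="\<lambda>k. (i + q - k) mod q"])
  fix a assume "a \<in> {..<q}" then show "(i + q - (i + q - a) mod q) mod q = a"
    using reidx_inv assms by simp
next
  fix a assume "a \<in> {..<q}" then show "(i + q - (i + q - a) mod q) mod q = a"
    using reidx_inv assms by simp
next
  fix a assume "a \<in> {..<q}" then show "(i + q - a) mod q \<in> {..<q}" using assms by simp
next
  fix a assume "a \<in> {..<q}" then show "(i + q - a) mod q \<in> {..<q}" using assms by simp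
qed simp

theorem lemma4p5:
  fixes q :: nat and \<beta> u :: real and \<Phi>0 :: "nat \<Rightarrow> real" and lam :: real
  assumes "q \<ge> 2" and "\<beta> > 0" and "u > 0"
    and "\<And>i. i < q \<Longrightarrow> \<Phi>0 i \<ge> 0"
    and "\<And>i. i < q \<Longrightarrow> \<Phi>0 ((q - i) mod q) = \<Phi>0 i"
    and "\<Phi>0 0 = 0"
    and "\<And>i. 0 < i \<Longrightarrow> i < q \<Longrightarrow> \<Phi>0 i \<ge> u"
    and "eigenvalue (clock_Q0 q \<beta> \<Phi>0) lam"
  shows "lam \<ge> (1 - (q - 1) * exp (- \<beta> * u)) / (1 + (q - 1) * exp (- \<beta> * u))"
proof -
  define Z where "Z = (\<Sum>k<q. exp (- \<beta> * \<Phi>0 k))"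
  define t where "t = exp (- \<beta> * u)"
  have t0: "t > 0" unfolding t_def by simp
  have split: "{..<q} = insert 0 {1..<q}" using assms(1) by auto
  have Zeq: "Z = 1 + (\<Sum>k\<in>{1..<q}. exp (- \<beta> * \<Phi>0 k))"
    unfolding Z_def using assms(6) by (subst split) simp
  have "(\<Sum>k\<in>{1..<q}. exp (- \<beta> * \<Phi>0 k)) \<le> (\<Sum>k\<in>{1..<q}. t)"
  proof (rule sum_mono)
    fix k assume "k \<in> {1..<q}"
    then have "\<Phi>0 k \<ge> u" using assms(7) by auto
    then have "- \<beta> * \<Phi>0 k \<le> - \<beta> * u" using assms(2) by simp
    then show "exp (- \<beta> * \<Phi>0 k) \<le> t" unfolding t_def by simp
  qed
  then have Zle: "Z \<le> 1 + real (q - 1) * t" using Zeq by simp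
  have Zge: "Z \<ge> 1" using Zeq by (simp add: sum_nonneg)
  from assms(8) obtain v where ev: "eigenvector (clock_Q0 q \<beta> \<Phi>0) v lam"
    unfolding eigenvalue_def by blast
  have dimv: "dim_vec v = q" and vne: "v \<noteq> 0\<^sub>v q"
    and eq: "clock_Q0 q \<beta> \<Phi>0 *\<^sub>v v = lam \<cdot>\<^sub>v v"
    using ev unfolding eigenvector_def clock_Q0_def by auto
  obtain j0 where j0: "j0 < q" "v $ j0 \<noteq> 0"
    using vne dimv by (metis eq_vecI index_zero_vec(1) index_zero_vec(2))
  define M where "M = Max ((\<lambda>j. \<bar>v $ j\<bar>) ` {..<q})"
  have "M \<in> (\<lambda>j. \<bar>v $ j\<bar>) ` {..<q}" unfolding M_def using j0 by (intro Max_in) auto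
  then obtain i where i: "i < q" "\<bar>v $ i\<bar> = M" by auto
  have Mmax: "\<And>j. j < q \<Longrightarrow> \<bar>v $ j\<bar> \<le> \<bar>v $ i\<bar>" using i unfolding M_def by auto
  have vi: "\<bar>v $ i\<bar> > 0" using Mmax[OF j0(1)] j0(2) by linarith
  define c where "c j = exp (- \<beta> * \<Phi>0 ((i + q - j) mod q)) / Z" for j
  have c0: "c j \<ge> 0" for j unfolding c_def using Zge by simp
  have csum: "(\<Sum>j<q. c j) = 1"
  proof -
    have "(\<Sum>j<q. c j) = (\<Sum>j<q. exp (- \<beta> * \<Phi>0 ((i + q - j) mod q))) / Z"
      unfolding c_def by (simp add: sum_divide_distrib)
    also have "\<dots> = Z / Z" using reidx_sum[OF i(1), of "\<lambda>k. exp (- \<beta> * \<Phi>0 k)"] Z_def by simp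
    finally show ?thesis using Zge by simp
  qed
  have ci: "c i = 1 / Z" unfolding c_def using assms(6) by simp
  have "(clock_Q0 q \<beta> \<Phi>0 *\<^sub>v v) $ i = (\<Sum>j<q. c j * v $ j)"
    using i(1) dimv unfolding clock_Q0_def c_def
    by (simp add: scalar_prod_def lessThan_atLeast0 Z_def)
  then have E: "(\<Sum>j<q. c j * v $ j) = lam * v $ i" using eq i(1) dimv by simp
  have rem: "(\<Sum>j<q. c j * v $ j) = c i * v $ i + (\<Sum>j\<in>{..<q} - {i}. c j * v $ j)"
    using i(1) by (simp add: sum.remove)
  have rem2: "(\<Sum>j<q. c j) = c i + (\<Sum>j\<in>{..<q} - {i}. c j)"
    using i(1) by (simp add: sum.remove)
  have "\<bar>\<Sum>j\<in>{..<q} - {i}. c j * v $ j\<bar> \<le> (\<Sum>j\<in>{..<q} - {i}. \<bar>c j * v $ j\<bar>)"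
    by (rule sum_abs)
  also have "\<dots> \<le> (\<Sum>j\<in>{..<q} - {i}. c j * \<bar>v $ i\<bar>)"
  proof (rule sum_mono)
    fix j assume "j \<in> {..<q} - {i}"
    then show "\<bar>c j * v $ j\<bar> \<le> c j * \<bar>v $ i\<bar>"
      using Mmax[of j] c0[of j] by (simp add: abs_mult mult_left_mono)
  qed
  also have "\<dots> = (1 - c i) * \<bar>v $ i\<bar>" using csum rem2 by (simp add: sum_distrib_right[symmetric])
  finally have "\<bar>(lam - c i) * v $ i\<bar> \<le> (1 - c i) * \<bar>v $ i\<bar>"
    using E rem by (simp add: algebra_simps)
  then have "\<bar>lam - c i\<bar> * \<bar>v $ i\<bar> \<le> (1 - c i) * \<bar>v $ i\<bar>" by (simp add: abs_mult)
  then have "\<bar>lam - c i\<bar> \<le> 1 - c i" using vi by simp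
  then have lamge: "lam \<ge> 2 / Z - 1" using ci by simp
  have "2 / (1 + real (q - 1) * t) \<le> 2 / Z"
    using Zle Zge by (intro divide_left_mono) auto
  moreover have "(1 - real (q - 1) * t) / (1 + real (q - 1) * t) = 2 / (1 + real (q - 1) * t) - 1"
  proof -
    have "1 + real (q - 1) * t > 0" using t0 by (simp add: add_pos_nonneg)
    then show ?thesis by (simp add: field_simps)
  qed
  ultimately show ?thesis using lamge unfolding t_def by simp
qed

end
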